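(* Any routing labeling scheme for rooted trees on $n$ nodes needs labels of length $\log n+\Omega(\log\log n)$ bits. This holds even when restricted to the family of rooted trees on $n$ nodes in which every node has at most $2$ children. Precisely: there is a constant $c>0$ such that for all sufficiently large $n$, every routing labeling scheme for that family assigns, to some node of some tree in the family, a label of length at least $\log n+c\log\log n$.
   Context: All logarithms are base $2$. A (designer-port) routing labeling scheme for a family $\mathcal{T}$ of rooted trees consists of an encoder and a decoder. - The encoder is given $T\in\mathcal{T}$. It assigns a binary string (label) $\ell(u)$ to every node $u$. It also labels the edges from each node $u$ to its $\deg(u)$ children with distinct port numbers from $\{1,\dots,\deg(u)\}$; the encoder is free to choose these port numbers. - The decoder receives only $\ell(u)$ and $\ell(w)$ for nodes $u\neq w$ of some $T\in\mathcal{T}$; the value $\lceil\log n\rceil$, where $n=|T|$, may also be assumed known. It must return $0$ if the next node on the path from $u$ to $w$ is the parent of $u$. Otherwise it must return the port number of the first edge on that path. - The length of the scheme is the maximum label length over all trees in $\mathcal{T}$ and all their nodes. *)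

theory Defs
  imports Complex_Main
begin

text \<open>A rooted tree on n nodes is represented with node set {0..<n}, root 0, and a
parent function p (with p 0 = 0 by convention). Every node reaches the root by
iterating p, which forces acyclicity.\<close>

definition is_rooted_tree :: "nat \<Rightarrow> (nat \<Rightarrow> nat) \<Rightarrow> bool" where
  "is_rooted_tree n p \<longleftrightarrow> n \<ge> 1 \<and> p 0 = 0 \<and> (\<forall>v<n. p v < n) \<and>
     (\<forall>v<n. \<exists>k. (p ^^ k) v = 0)"

definition children :: "nat \<Rightarrow> (nat \<Rightarrow> nat) \<Rightarrow> nat \<Rightarrow> nat set" where
  "children n p u = {v. 0 < v \<and> v < n \<and> p v = u}"

definition is_anc :: "(nat \<Rightarrow> nat) \<Rightarrow> nat \<Rightarrow> nat \<Rightarrow> bool" where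
  "is_anc p u w \<longleftrightarrow> (\<exists>k. (p ^^ k) w = u)"

definition binary_tree :: "nat \<Rightarrow> (nat \<Rightarrow> nat) \<Rightarrow> bool" where
  "binary_tree n p \<longleftrightarrow> is_rooted_tree n p \<and> (\<forall>u<n. card (children n p u) \<le> 2)"

text \<open>Port assignment: port v is the port number of the edge from p v to its child v;
at each node u the ports of its children are a bijection onto {1..deg u}.\<close>
definition valid_ports :: "nat \<Rightarrow> (nat \<Rightarrow> nat) \<Rightarrow> (nat \<Rightarrow> nat) \<Rightarrow> bool" where
  "valid_ports n p port \<longleftrightarrow>
     (\<forall>u<n. bij_betw port (children n p u) {1..card (children n p u)})"

definition routes_correctly ::
  "nat \<Rightarrow> (nat \<Rightarrow> nat) \<Rightarrow> (bool list \<Rightarrow> bool list \<Rightarrow> nat) \<Rightarrow> (nat \<Rightarrow> bool list) \<Rightarrow> (nat \<Rightarrow> nat) \<Rightarrow> bool" where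
  "routes_correctly n p dec lab port \<longleftrightarrow>
     (\<forall>u<n. \<forall>w<n. u \<noteq> w \<longrightarrow>
        ((\<not> is_anc p u w \<longrightarrow> dec (lab u) (lab w) = 0) \<and>
         (\<forall>v \<in> children n p u. is_anc p v w \<longrightarrow> dec (lab u) (lab w) = port v)))"

end

theory Submission
  imports Defs
begin


definition pk :: "nat \<Rightarrow> nat \<Rightarrow> nat" where
  "pk k v = (if v mod k = 0 then v - k else v - 1)"

lemma modh: "x < k \<Longrightarrow> (i*k + x) mod k = (x::nat)" by simp
lemma divh: "x < k \<Longrightarrow> (i*k + x) div k = (i::nat)" by simp

lemma pk_le: "pk k v \<le> v" by (simp add: pk_def)

lemma pk_less: "0 < k \<Longrightarrow> 0 < v \<Longrightarrow> pk k v < v" by (simp add: pk_def)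

lemma pk_reach: "0 < k \<Longrightarrow> \<exists>m. (pk k ^^ m) v = 0"
proof (induction v rule: less_induct)
  case (less v)
  show ?case
  proof (cases "v = 0")
    case True then show ?thesis by (metis funpow_0)
  next
    case False
    then obtain m where "(pk k ^^ m) (pk k v) = 0" using less pk_less by blast
    then have "(pk k ^^ Suc m) v = 0" by (simp add: funpow_Suc_right del: funpow.simps)
    then show ?thesis by blast
  qed
qed

lemma pk_children: "0 < k \<Longrightarrow> children n (pk k) u \<subseteq> {u+1, u+k}"
proof
  fix v assume k: "0 < k" and v: "v \<in> children n (pk k) u"
  then have v0: "0 < v" and pv: "pk k v = u" by (auto simp: children_def)
  show "v \<in> {u+1, u+k}"
  proof (cases "v mod k = 0")
    case True
    then have "k dvd v" by auto
    then have "k \<le> v" using v0 by (simp add: dvd_imp_le)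
    then show ?thesis using pv True by (auto simp: pk_def)
  next
    case False then show ?thesis using pv v0 by (auto simp: pk_def)
  qed
qed

lemma pk_binary: "0 < k \<Longrightarrow> 1 \<le> n \<Longrightarrow> binary_tree n (pk k)"
proof -
  assume k: "0 < k" and n: "1 \<le> n"
  have "\<forall>u<n. card (children n (pk k) u) \<le> 2"
  proof (intro allI impI)
    fix u
    have "card (children n (pk k) u) \<le> card {u+1, u+k}"
      by (rule card_mono) (simp, rule pk_children[OF k])
    also have "\<dots> \<le> 2" by (simp add: card_insert_if)
    finally show "card (children n (pk k) u) \<le> 2" .
  qed
  moreover have "is_rooted_tree n (pk k)"
    unfolding is_rooted_tree_def using n pk_reach[OF k] pk_le
    by (auto simp: pk_def intro: le_less_trans)
  ultimately show ?thesis by (simp add: binary_tree_def)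
qed

lemma pk_iter_down: "0 < k \<Longrightarrow> t < k \<Longrightarrow> d \<le> t \<Longrightarrow> (pk k ^^ d) (i*k + t) = i*k + t - d"
proof (induction d)
  case 0 then show ?case by simp
next
  case (Suc d)
  then have IH: "(pk k ^^ d) (i*k + t) = i*k + (t - d)" by simp
  have m: "(i*k + (t - d)) mod k = t - d" using Suc by (intro modh) simp
  have "(pk k ^^ Suc d) (i*k + t) = pk k (i*k + (t - d))" using IH by simp
  also have "\<dots> = i*k + (t - d) - 1" using m Suc(4) unfolding pk_def by (simp del: mod_mult_self4 mod_mult_self3)
  also have "\<dots> = i*k + t - Suc d" using Suc(4) by simp
  finally show ?case .
qed

definition inA :: "nat \<Rightarrow> nat \<Rightarrow> nat \<Rightarrow> bool" where
  "inA k w v \<longleftrightarrow> (v div k = w div k \<and> v mod k \<le> w mod k) \<or> (v mod k = 0 \<and> v div k \<le> w div k)"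

lemma pk_inA: assumes k: "0 < k" and a: "inA k w v" shows "inA k w (pk k v)"
proof (cases "v mod k = 0")
  case True
  obtain q where q: "v = q * k" using True by (metis mult.commute mod_eq_0_iff_dvd dvd_def)
  have "pk k v = (q - 1) * k" using True q by (simp add: pk_def diff_mult_distrib)
  moreover have "q \<le> w div k" using a q k True by (auto simp: inA_def)
  ultimately show ?thesis using k by (simp add: inA_def) arith
next
  case False
  then have a1: "v div k = w div k \<and> v mod k \<le> w mod k" using a by (auto simp: inA_def)
  define q t where "q = v div k" and "t = v mod k"
  have v: "v = q*k + t" by (simp add: q_def t_def)
  have t: "0 < t" "t < k" using False k by (auto simp: t_def)
  have "pk k v = q*k + (t - 1)" using False v t by (simp add: pk_def)
  have t1: "t - 1 < k" using t by simp
  have "(q*k + (t - 1)) div k = q" using t1 by (rule divh)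
  moreover have "(q*k + (t - 1)) mod k = t - 1" using t1 by (rule modh)
  ultimately have "pk k v div k = w div k" "pk k v mod k \<le> w mod k"
    using a1 \<open>pk k v = q*k + (t - 1)\<close> by (simp_all add: q_def t_def, linarith)
  then show ?thesis by (simp add: inA_def)
qed

lemma iter_inA: "0 < k \<Longrightarrow> inA k w ((pk k ^^ m) w)"
proof (induction m)
  case 0 then show ?case by (simp add: inA_def)
next
  case (Suc m) then show ?case using pk_inA by simp
qed

lemma anc_inA: "0 < k \<Longrightarrow> is_anc (pk k) u w \<Longrightarrow> inA k w u"
  using iter_inA by (auto simp: is_anc_def)

lemma iter_stay: "\<forall>v<n. p v < n \<Longrightarrow> w < n \<Longrightarrow> (p ^^ m) w < n"
  by (induction m) auto

lemma route_nz:
  assumes t: "is_rooted_tree n p" and vp: "valid_ports n p port"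
    and rc: "routes_correctly n p dec lab port"
    and u: "u < n" and w: "w < n" and uw: "u \<noteq> w" and a: "is_anc p u w"
  shows "dec (lab u) (lab w) \<noteq> 0"
proof -
  define m where "m = (LEAST m. (p ^^ m) w = u)"
  have ex: "\<exists>m. (p ^^ m) w = u" using a by (simp add: is_anc_def)
  have mu: "(p ^^ m) w = u" unfolding m_def using ex by (rule LeastI_ex)
  have m0: "m \<noteq> 0" using mu uw by (cases m) auto
  define v where "v = (p ^^ (m - 1)) w"
  obtain m' where m': "m = Suc m'" using m0 by (cases m) auto
  have pv: "p v = u" using mu unfolding v_def m' by simp
  have vn: "v < n" unfolding v_def using t w iter_stay by (auto simp: is_rooted_tree_def)
  have v0: "0 < v"
  proof (rule ccontr)
    assume "\<not> 0 < v"
    then have "v = 0" by simp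
    then have "u = v" using pv t by (simp add: is_rooted_tree_def)
    then have "(p ^^ (m - 1)) w = u" by (simp add: v_def)
    then have "m \<le> m - 1" unfolding m_def by (rule Least_le)
    then show False using m0 by simp
  qed
  have vc: "v \<in> children n p u" using v0 vn pv by (simp add: children_def)
  have "is_anc p v w" unfolding is_anc_def v_def by blast
  then have "dec (lab u) (lab w) = port v" using rc u w uw vc by (simp add: routes_correctly_def)
  moreover have "port v \<in> {1..card (children n p u)}"
  proof -
    have "bij_betw port (children n p u) {1..card (children n p u)}" using vp u by (simp add: valid_ports_def)
    then show ?thesis using vc by (rule bij_betw_apply)
  qed
  ultimately show ?thesis by simp
qed

lemma route_z:
  assumes rc: "routes_correctly n p dec lab port"
    and u: "u < n" and w: "w < n" and uw: "u \<noteq> w" and a: "\<not> is_anc p u w"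
  shows "dec (lab u) (lab w) = 0"
  using assms by (simp add: routes_correctly_def)


definition C :: "nat \<Rightarrow> nat \<Rightarrow> nat set" where "C k i = {i*k+1..<i*k+k}"

lemma C_mem: "v \<in> C k i \<Longrightarrow> \<exists>t. v = i*k + t \<and> 0 < t \<and> t < k"
  unfolding C_def by (rule exI[of _ "v - i*k"]) auto

lemma C_lt: "v \<in> C k i \<Longrightarrow> (i+1)*k \<le> n \<Longrightarrow> v < n"
  unfolding C_def by auto

lemma C_anc: assumes k: "0<k" and u: "u \<in> C k i" and w: "w \<in> C k i" and uw: "u < w"
  shows "is_anc (pk k) u w"
proof -
  obtain t where t: "u = i*k + t" "0 < t" "t < k" using C_mem[OF u] by blast
  obtain t' where t': "w = i*k + t'" "0 < t'" "t' < k" using C_mem[OF w] by blast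
  have "(pk k ^^ (t' - t)) (i*k + t') = i*k + t' - (t' - t)" using k t' by (intro pk_iter_down) auto
  also have "\<dots> = u" using t t' uw by simp
  finally show ?thesis unfolding is_anc_def using t' by blast
qed

lemma C_notanc: assumes k: "0<k" and u: "u \<in> C k i" and w: "w \<in> C k i'" and c: "i \<noteq> i' \<or> w < u"
  shows "\<not> is_anc (pk k) u w"
proof
  assume "is_anc (pk k) u w"
  then have a: "inA k w u" using anc_inA k by blast
  obtain t where t: "u = i*k + t" "0 < t" "t < k" using C_mem[OF u] by blast
  obtain t' where t': "w = i'*k + t'" "0 < t'" "t' < k" using C_mem[OF w] by blast
  have "u div k = i" "u mod k = t" "w div k = i'" "w mod k = t'" using t t' by simp_all
  then show False using a c t t' unfolding inA_def by auto
qed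

lemma top_anc: assumes k: "0<k" and w: "w \<in> C k i" shows "is_anc (pk k) (i*k) w"
proof -
  obtain t' where t': "w = i*k + t'" "0 < t'" "t' < k" using C_mem[OF w] by blast
  have "(pk k ^^ t') (i*k + t') = i*k + t' - t'" using k t' by (intro pk_iter_down) auto
  then show ?thesis unfolding is_anc_def using t' by auto
qed

lemma top_notanc: assumes k: "0<k" and u: "u \<in> C k i" and ii: "i < i'"
  shows "\<not> is_anc (pk k) (i'*k) u"
proof
  assume "is_anc (pk k) (i'*k) u"
  then have a: "inA k u (i'*k)" using anc_inA k by blast
  obtain t where t: "u = i*k + t" "0 < t" "t < k" using C_mem[OF u] by blast
  have "u div k = i" using t by simp
  then show False using a ii k unfolding inA_def by auto
qed

locale lab_tree =
  fixes n k dec lab port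
  assumes k: "0 < k" and n: "1 \<le> n"
    and vp: "valid_ports n (pk k) port"
    and rc: "routes_correctly n (pk k) dec lab port"
begin

lemma rt: "is_rooted_tree n (pk k)" using pk_binary[OF k n] by (simp add: binary_tree_def)

lemma within:
  assumes u: "u \<in> C k i" and w: "w \<in> C k i" and b: "(i+1)*k \<le> n" and ne: "lab u \<noteq> lab w"
  shows "dec (lab u) (lab w) \<noteq> 0 \<or> dec (lab w) (lab u) \<noteq> 0"
proof -
  have uw: "u \<noteq> w" using ne by auto
  have un: "u < n" "w < n" using u w b C_lt by blast+
  show ?thesis
  proof (cases "u < w")
    case True
    then show ?thesis using route_nz[OF rt vp rc un uw C_anc[OF k u w True]] by simp
  next
    case False
    then have "w < u" using uw by simp
    then show ?thesis using route_nz[OF rt vp rc un(2) un(1) _ C_anc[OF k w u]] uw by auto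
  qed
qed

lemma between:
  assumes u: "u \<in> C k i" and w: "w \<in> C k i'" and b: "(i+1)*k \<le> n" "(i'+1)*k \<le> n" and ne: "i \<noteq> i'"
  shows "dec (lab u) (lab w) = 0"
proof -
  have un: "u < n" "w < n" using u w b C_lt by blast+
  have uw: "u \<noteq> w"
  proof
    assume "u = w"
    then show False using C_mem[OF u] C_mem[OF w] ne
      by (metis add_lessD1 add_mult_distrib2 le_less_trans mult.commute nat_mult_less_cancel_disj not_less_eq_eq order_less_imp_not_less add_less_cancel_left divh)
  qed
  show ?thesis using route_z[OF rc un uw C_notanc[OF k u w]] ne by simp
qed

lemma inj_C:
  assumes b: "(i+1)*k \<le> n" shows "inj_on lab (C k i)"
proof (rule inj_onI)
  fix u w assume u: "u \<in> C k i" and w: "w \<in> C k i" and e: "lab u = lab w"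
  show "u = w"
  proof (rule ccontr)
    assume uw: "u \<noteq> w"
    have un: "u < n" "w < n" using u w b C_lt by blast+
    {
      fix a c assume a: "a \<in> C k i" and c: "c \<in> C k i" and ac: "a < c" and e: "lab a = lab c"
      have an: "a < n" "c < n" using a c b C_lt by blast+
      have "dec (lab a) (lab c) \<noteq> 0" using route_nz[OF rt vp rc an _ C_anc[OF k a c ac]] ac by simp
      moreover have "dec (lab c) (lab a) = 0" using route_z[OF rc an(2) an(1) _ C_notanc[OF k c a]] ac by simp
      ultimately have False using e by simp
    }
    then show False using u w e uw by (metis linorder_neqE_nat)
  qed
qed

lemma disj_C:
  assumes u: "u \<in> C k i" and w: "w \<in> C k i'" and b: "(i+1)*k \<le> n" "(i'+1)*k \<le> n" and ii: "i < i'"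
  shows "lab u \<noteq> lab w"
proof
  assume e: "lab u = lab w"
  have un: "u < n" "w < n" using u w b C_lt by blast+
  have zn: "i'*k < n" using b(2) k by (simp add: add_mult_distrib)
  obtain t where t: "u = i*k + t" "0 < t" "t < k" using C_mem[OF u] by blast
  obtain t' where t': "w = i'*k + t'" "0 < t'" "t' < k" using C_mem[OF w] by blast
  have zw: "i'*k \<noteq> w" using t' by simp
  have zu: "i'*k \<noteq> u"
  proof
    assume "i'*k = u"
    then have "(i'*k) mod k = u mod k" by simp
    then show False using t by simp
  qed
  have "dec (lab (i'*k)) (lab w) \<noteq> 0" using route_nz[OF rt vp rc zn un(2) zw top_anc[OF k w]] .
  moreover have "dec (lab (i'*k)) (lab u) = 0" using route_z[OF rc zn un(1) zu top_notanc[OF k u ii]] .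
  ultimately show False using e by simp
qed

end



lemma geo4: "3 * (\<Sum>j<J. (4::nat)^j) + 1 = 4^J"
  by (induction J) auto

lemma meet_one:
  fixes R :: "'a \<Rightarrow> 'a \<Rightarrow> bool"
  assumes card: "\<And>i. i < m \<Longrightarrow> finite (ch i) \<and> card (ch i) = s"
    and disj: "\<And>i i'. i < m \<Longrightarrow> i' < m \<Longrightarrow> i \<noteq> i' \<Longrightarrow> ch i \<inter> ch i' = {}"
    and between: "\<And>i i' a b. i < m \<Longrightarrow> i' < m \<Longrightarrow> i \<noteq> i' \<Longrightarrow> a \<in> ch i \<Longrightarrow> b \<in> ch i' \<Longrightarrow> \<not> R a b"
    and D: "\<And>a b. a \<in> D \<Longrightarrow> b \<in> D \<Longrightarrow> a \<noteq> b \<Longrightarrow> R a b \<or> R b a"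
  shows "card (D \<inter> (\<Union>i<m. ch i)) \<le> s"
proof (cases "D \<inter> (\<Union>i<m. ch i) = {}")
  case True then show ?thesis by simp
next
  case False
  then obtain a i0 where a: "a \<in> D" "i0 < m" "a \<in> ch i0" by blast
  have sub: "D \<inter> (\<Union>i<m. ch i) \<subseteq> ch i0"
  proof
    fix b assume "b \<in> D \<inter> (\<Union>i<m. ch i)"
    then obtain i where b: "b \<in> D" "i < m" "b \<in> ch i" by blast
    show "b \<in> ch i0"
    proof (cases "i = i0")
      case True then show ?thesis using b by simp
    next
      case False
      then have "a \<noteq> b" using disj[OF a(2) b(2)] a b by blast
      then have "R a b \<or> R b a" using D a b by blast
      then show ?thesis using between[OF a(2) b(2)] between[OF b(2) a(2)] False a b by auto
    qed
  qed
  have "card (D \<inter> (\<Union>i<m. ch i)) \<le> card (ch i0)"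
    using sub card[OF a(2)] by (intro card_mono) auto
  then show ?thesis using card[OF a(2)] by simp
qed

lemma comb:
  fixes R :: "'a \<Rightarrow> 'a \<Rightarrow> bool" and ch :: "nat \<Rightarrow> nat \<Rightarrow> 'a set" and m :: "nat \<Rightarrow> nat"
  assumes card: "\<And>j i. i < m j \<Longrightarrow> finite (ch j i) \<and> card (ch j i) = 4^j"
    and disj: "\<And>j i i'. i < m j \<Longrightarrow> i' < m j \<Longrightarrow> i \<noteq> i' \<Longrightarrow> ch j i \<inter> ch j i' = {}"
    and within: "\<And>j i a b. i < m j \<Longrightarrow> a \<in> ch j i \<Longrightarrow> b \<in> ch j i \<Longrightarrow> a \<noteq> b \<Longrightarrow> R a b \<or> R b a"
    and between: "\<And>j i i' a b. i < m j \<Longrightarrow> i' < m j \<Longrightarrow> i \<noteq> i' \<Longrightarrow> a \<in> ch j i \<Longrightarrow> b \<in> ch j i' \<Longrightarrow> \<not> R a b"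
  shows "(\<Sum>j<J. 2 * m j * 4^j) \<le> 3 * card (\<Union>j<J. \<Union>i<m j. ch j i)"
proof (induction J)
  case 0 then show ?case by simp
next
  case (Suc J)
  define E where "E = (\<Union>j<J. \<Union>i<m j. ch j i)"
  have finE: "finite E" unfolding E_def using card by auto
  have fin: "\<And>i. i < m J \<Longrightarrow> finite (ch J i)" using card by blast
  have each: "2 * 4^J \<le> 3 * card (ch J i - E)" if i: "i < m J" for i
  proof -
    have "ch J i \<inter> E = (\<Union>j<J. ch J i \<inter> (\<Union>i'<m j. ch j i'))" unfolding E_def by blast
    then have "card (ch J i \<inter> E) \<le> (\<Sum>j<J. card (ch J i \<inter> (\<Union>i'<m j. ch j i')))"
      using card_UN_le[of "{..<J}" "\<lambda>j. ch J i \<inter> (\<Union>i'<m j. ch j i')"] by (simp only: finite_lessThan)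
    also have "\<dots> \<le> (\<Sum>j<J. 4^j)"
    proof (rule sum_mono)
      fix j assume "j \<in> {..<J}"
      show "card (ch J i \<inter> (\<Union>i'<m j. ch j i')) \<le> 4^j"
        by (rule meet_one[where R=R]) (use card disj between within[OF i] in auto)
    qed
    finally have le: "card (ch J i \<inter> E) \<le> (\<Sum>j<J. 4^j)" .
    have "card (ch J i - E) = card (ch J i) - card (ch J i \<inter> E)"
      using fin[OF i] by (intro card_Diff_subset_Int) auto
    then show ?thesis using le card[OF i] geo4[of J] by simp
  qed
  have eqU: "(\<Union>j<Suc J. \<Union>i<m j. ch j i) = E \<union> (\<Union>i<m J. ch J i - E)"
    unfolding E_def lessThan_Suc by blast
  have cardU: "card (E \<union> (\<Union>i<m J. ch J i - E)) = card E + card (\<Union>i<m J. ch J i - E)"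
    using finE fin by (intro card_Un_disjoint) auto
  have cardS: "card (\<Union>i<m J. ch J i - E) = (\<Sum>i<m J. card (ch J i - E))"
    using fin disj[of _ J] by (intro card_UN_disjoint) auto
  have "2 * m J * 4^J = (\<Sum>i<m J. 2 * 4^J)" by simp
  also have "\<dots> \<le> (\<Sum>i<m J. 3 * card (ch J i - E))" using each by (intro sum_mono) auto
  also have "\<dots> = 3 * card (\<Union>i<m J. ch J i - E)" using cardS by (simp add: sum_distrib_left)
  finally have st: "2 * m J * 4^J \<le> 3 * card (\<Union>i<m J. ch J i - E)" .
  show ?case using Suc.IH st unfolding eqU cardU by (simp add: E_def)
qed



lemma geo2: "(\<Sum>i\<le>l. (2::nat)^i) < 2^(l+1)"
  by (induction l) auto

lemma card_short_lists: "card {xs::bool list. length xs \<le> l} < 2^(l+1)"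
proof -
  have "card {xs::bool list. set xs \<subseteq> UNIV \<and> length xs \<le> l} = (\<Sum>i\<le>l. card (UNIV::bool set)^i)"
    by (rule card_lists_length_le) simp
  then show ?thesis using geo2[of l] by (simp add: card_UNIV_bool)
qed

lemma fin_short_lists: "finite {xs::bool list. length xs \<le> l}"
proof -
  have "finite {xs::bool list. set xs \<subseteq> UNIV \<and> length xs \<le> l}"
    by (rule finite_lists_length_le) simp
  then show ?thesis by simp
qed

lemma card_C: "0 < k \<Longrightarrow> card (C k i) = k - 1" by (simp add: C_def)

lemma blk: "i < n div k \<Longrightarrow> (i+1)*k \<le> (n::nat)"
proof -
  assume "i < n div k"
  then have "(i+1)*k \<le> (n div k) * k" by (intro mult_right_mono) auto
  also have "\<dots> \<le> n" by simp
  finally show ?thesis .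
qed

lemma level_bound: "4^(j+1) \<le> (n::nat) \<Longrightarrow> 3*n \<le> 8 * (n div (4^j+1)) * 4^j"
proof -
  assume h: "4^(j+1) \<le> n"
  define k where "k = (4::nat)^j + 1"
  define m where "m = n div k"
  have "n = m*k + n mod k" by (simp add: m_def)
  moreover have "n mod k < k" by (simp add: k_def)
  then have "n mod k \<le> 4^j" by (simp add: k_def)
  ultimately have "n \<le> m*k + 4^j" by linarith
  moreover have "m*k \<le> 2*m*4^j" unfolding k_def using one_le_power[of "4::nat" j] by (simp add: algebra_simps)
  ultimately have "n \<le> 2*m*4^j + 4^j" by linarith
  then show ?thesis using h by (simp add: m_def k_def)
qed

theorem mainTheorem9:
  "\<exists>c::real. c > 0 \<and> (\<exists>N::nat. \<forall>n\<ge>N.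
     \<not> (\<exists>dec :: bool list \<Rightarrow> bool list \<Rightarrow> nat.
          \<forall>p. binary_tree n p \<longrightarrow>
            (\<exists>lab port. valid_ports n p port \<and> routes_correctly n p dec lab port \<and>
               (\<forall>u<n. real (length (lab u)) < log 2 (real n) + c * log 2 (log 2 (real n))))))"
proof (intro exI conjI allI impI notI)
  show "(1/2::real) > 0" by simp
  fix n :: nat and dd
  assume nN: "2^400 \<le> n"
  assume "\<exists>dec :: bool list \<Rightarrow> bool list \<Rightarrow> nat.
          \<forall>p. binary_tree n p \<longrightarrow>
            (\<exists>lab port. valid_ports n p port \<and> routes_correctly n p dec lab port \<and>
               (\<forall>u<n. real (length (lab u)) < log 2 (real n) + 1/2 * log 2 (log 2 (real n))))"
  then obtain dec :: "bool list \<Rightarrow> bool list \<Rightarrow> nat" where dec: "\<forall>p. binary_tree n p \<longrightarrow>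
            (\<exists>lab port. valid_ports n p port \<and> routes_correctly n p dec lab port \<and>
               (\<forall>u<n. real (length (lab u)) < log 2 (real n) + 1/2 * log 2 (log 2 (real n))))" by blast
  define x where "x = log 2 (real n)"
  define L where "L = x + 1/2 * log 2 x"
  have n1: "1 \<le> n" using nN by (meson le_trans one_le_power one_le_numeral)
  have npos: "0 < real n" using n1 by simp
  have x400: "400 \<le> x"
  proof -
    have e: "(2::real) powr real (400::nat) = 2^400" by (rule powr_realpow) simp
    have "real (2^400) \<le> real n" using nN by (simp only: of_nat_le_iff)
    then have "(2::real) powr 400 \<le> real n" using e by simp
    then have "log 2 ((2::real) powr 400) \<le> x" unfolding x_def by (subst log_le_cancel_iff) auto
    then show ?thesis by (subst (asm) log_powr_cancel) auto
  qed
  define k :: "nat \<Rightarrow> nat" where "k j = 4^j + 1" for j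
  have k0: "0 < k j" for j by (simp add: k_def)
  have "\<forall>j. \<exists>lab port. valid_ports n (pk (k j)) port \<and> routes_correctly n (pk (k j)) dec lab port \<and>
               (\<forall>u<n. real (length (lab u)) < L)"
    using dec pk_binary[OF k0 n1] unfolding L_def x_def by blast
  then obtain LAB PORT where LP: "\<And>j. valid_ports n (pk (k j)) (PORT j) \<and> routes_correctly n (pk (k j)) dec (LAB j) (PORT j) \<and>
               (\<forall>u<n. real (length (LAB j u)) < L)"
    by metis
  have LT: "lab_tree n (k j) dec (LAB j) (PORT j)" for j
    using LP[of j] k0[of j] n1 by (simp add: lab_tree_def)
  define m where "m j = n div k j" for j
  define ch where "ch j i = LAB j ` C (k j) i" for j i
  define R where "R a b = (dec a b \<noteq> 0)" for a b
  define J where "J = nat \<lfloor>x/2\<rfloor>"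
  define E where "E = (\<Union>j<J. \<Union>i<m j. ch j i)"
  have bl: "i < m j \<Longrightarrow> (i+1) * k j \<le> n" for i j unfolding m_def by (rule blk)
  have comb_res: "(\<Sum>j<J. 2 * m j * 4^j) \<le> 3 * card E"
    unfolding E_def
  proof (rule comb[where R=R])
    fix j i assume i: "i < m j"
    show "finite (ch j i) \<and> card (ch j i) = 4^j"
      using lab_tree.inj_C[OF LT bl[OF i]] card_C[OF k0] unfolding ch_def
      by (simp add: card_image k_def C_def)
  next
    fix j i i' assume i: "i < m j" and i': "i' < m j" and ne: "i \<noteq> i'"
    show "ch j i \<inter> ch j i' = {}"
    proof (cases "i < i'")
      case True then show ?thesis unfolding ch_def
        using lab_tree.disj_C[OF LT _ _ bl[OF i] bl[OF i']] by blast
    next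
      case False then have "i' < i" using ne by simp
      then have h: "\<And>u w. u \<in> C (k j) i \<Longrightarrow> w \<in> C (k j) i' \<Longrightarrow> LAB j u \<noteq> LAB j w"
        using lab_tree.disj_C[OF LT _ _ bl[OF i'] bl[OF i]] by (metis (no_types))
      then show ?thesis unfolding ch_def by blast
    qed
  next
    fix j i a b assume i: "i < m j" and a: "a \<in> ch j i" and b: "b \<in> ch j i" and ne: "a \<noteq> b"
    then obtain u w where "u \<in> C (k j) i" "w \<in> C (k j) i" "a = LAB j u" "b = LAB j w"
      unfolding ch_def by blast
    then show "R a b \<or> R b a" using lab_tree.within[OF LT _ _ bl[OF i]] ne unfolding R_def by blast
  next
    fix j i i' a b assume i: "i < m j" and i': "i' < m j" and ne: "i \<noteq> i'"
      and a: "a \<in> ch j i" and b: "b \<in> ch j i'"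
    then obtain u w where "u \<in> C (k j) i" "w \<in> C (k j) i'" "a = LAB j u" "b = LAB j w"
      unfolding ch_def by blast
    then show "\<not> R a b" using lab_tree.between[OF LT _ _ bl[OF i] bl[OF i'] ne] unfolding R_def by simp
  qed
  have x0: "0 \<le> x" using x400 by simp
  have J2: "real (2*J) \<le> x" unfolding J_def using x0 by linarith
  have Jx: "x < 2 * real J + 2" unfolding J_def using x0 by linarith
  have fourJ: "4^J \<le> n"
  proof -
    have "(2::real) powr (real (2*J)) = 2^(2*J)" by (rule powr_realpow) simp
    then have "real (4^J) = 2 powr (real (2*J))"
      by (simp add: power_mult)
    also have "\<dots> \<le> 2 powr x" using J2 by (intro powr_mono) auto
    also have "\<dots> = real n" unfolding x_def using npos by simp
    finally show ?thesis by (simp only: of_nat_le_iff)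
  qed
  have lvl: "3*n \<le> 8 * m j * 4^j" if j: "j < J" for j
  proof -
    have "(4::nat)^(j+1) \<le> 4^J" using j by (intro power_increasing) auto
    then show ?thesis using level_bound[of j n] fourJ unfolding m_def k_def by simp
  qed
  have "3 * n * J \<le> (\<Sum>j<J. 8 * m j * 4^j)"
  proof -
    have "(\<Sum>j<J. 3 * n) \<le> (\<Sum>j<J. 8 * m j * 4^j)" using lvl by (intro sum_mono) auto
    then show ?thesis by (simp add: mult.commute)
  qed
  also have "\<dots> = 4 * (\<Sum>j<J. 2 * m j * 4^j)" by (simp add: sum_distrib_left mult.assoc)
  also have "\<dots> \<le> 12 * card E" using comb_res by simp
  finally have lowE: "n * J \<le> 4 * card E" by (simp add: mult.commute)
  define l where "l = nat \<lfloor>L\<rfloor>"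
  have L0: "0 \<le> L" unfolding L_def using x400 by simp
  have Esub: "E \<subseteq> {xs::bool list. length xs \<le> l}"
  proof
    fix a assume "a \<in> E"
    then obtain j i u where i: "i < m j" and u: "u \<in> C (k j) i" and a: "a = LAB j u"
      unfolding E_def ch_def by blast
    have "u < n" using C_lt[OF u bl[OF i]] .
    then have "real (length a) < L" using LP[of j] a by blast
    then have "length a \<le> l" unfolding l_def by linarith
    then show "a \<in> {xs. length xs \<le> l}" by simp
  qed
  have "card E \<le> card {xs::bool list. length xs \<le> l}"
    using Esub fin_short_lists by (rule card_mono[rotated])
  then have cE: "card E < 2^(l+1)" using card_short_lists[of l] by linarith
  have "real (2^l) = 2 powr real l" by (simp add: powr_realpow)
  also have "\<dots> \<le> 2 powr L" unfolding l_def using L0 by (intro powr_mono) auto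
  also have "\<dots> = 2 powr x * 2 powr (1/2 * log 2 x)" unfolding L_def by (simp add: powr_add)
  also have "2 powr x = real n" unfolding x_def using npos by simp
  also have "2 powr (1/2 * log 2 x) = (2 powr log 2 x) powr (1/2)"
    by (simp add: powr_powr mult.commute)
  also have "(2 powr log 2 x) = x" using x400 by simp
  also have "x powr (1/2) = sqrt x" using x400 by (simp add: powr_half_sqrt)
  finally have up: "real (2^l) \<le> real n * sqrt x" .
  have "real n * real J \<le> 4 * real (card E)" using lowE by (metis of_nat_le_iff of_nat_mult of_nat_numeral)
  also have "\<dots> < 4 * real (2^(l+1))" using cE by (simp only: of_nat_less_iff mult_less_cancel_left) simp
  also have "\<dots> = 8 * real (2^l)" by simp
  also have "\<dots> \<le> 8 * (real n * sqrt x)" using up by simp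
  finally have "real J < 8 * sqrt x" using npos by (simp add: mult.commute mult.left_commute)
  then have xl: "x < 16 * sqrt x + 2" using Jx by linarith
  have s20: "20 \<le> sqrt x" using x400 real_sqrt_le_mono[of 400 x] by simp
  have "x = sqrt x * sqrt x" using x0 by simp
  also have "\<dots> \<ge> 20 * sqrt x" using s20 x0 by (intro mult_right_mono) auto
  finally show False using xl s20 by linarith
qed

end
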